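(* Let $\alpha>0$, $0<\beta_1<1$, $0<\beta_2<1$, $\epsilon>0$, $\lambda>0$, and $w_0\in\mathbb{R}$. Define the Adam iterates for the gradient $g(w)=\lambda w$ by $m_0=0$, $v_0=0$ and, for $t\ge1$, $$g_t=\lambda w_{t-1},\quad m_t=\beta_1 m_{t-1}+(1-\beta_1)g_t,\quad v_t=\beta_2 v_{t-1}+(1-\beta_2)g_t^2,\quad w_t=w_{t-1}-\alpha\,\frac{m_t/(1-\beta_1^t)}{\sqrt{v_t/(1-\beta_2^t)+\epsilon}}.$$ If $w_t$ converges to some $w_*\in\mathbb{R}$ as $t\to\infty$, then $w_*=0$.
   Context: This models a single scalar weight $w_t$ of a network under $L_2$ regularization with parameter $\lambda$, trained with the Adam optimizer, in the situation where the loss gradient vanishes (the connected ReLU unit is never activated), so that the gradient equals $\lambda$ times the current weight. *)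

theory Defs
  imports Complex_Main
begin

fun adam_state :: "real \<Rightarrow> real \<Rightarrow> real \<Rightarrow> real \<Rightarrow> real \<Rightarrow> real \<Rightarrow> nat \<Rightarrow> real \<times> real \<times> real" where
  "adam_state alpha beta1 beta2 eps lam w0 0 = (0, 0, w0)"
| "adam_state alpha beta1 beta2 eps lam w0 (Suc t) =
     (let (m, v, w) = adam_state alpha beta1 beta2 eps lam w0 t;
          g = lam * w;
          m' = beta1 * m + (1 - beta1) * g;
          v' = beta2 * v + (1 - beta2) * g\<^sup>2;
          w' = w - alpha * (m' / (1 - beta1 ^ Suc t)) / sqrt (v' / (1 - beta2 ^ Suc t) + eps)
      in (m', v', w'))"

definition adam_m :: "real \<Rightarrow> real \<Rightarrow> real \<Rightarrow> real \<Rightarrow> real \<Rightarrow> real \<Rightarrow> nat \<Rightarrow> real" where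
  "adam_m alpha beta1 beta2 eps lam w0 t = fst (adam_state alpha beta1 beta2 eps lam w0 t)"
definition adam_v :: "real \<Rightarrow> real \<Rightarrow> real \<Rightarrow> real \<Rightarrow> real \<Rightarrow> real \<Rightarrow> nat \<Rightarrow> real" where
  "adam_v alpha beta1 beta2 eps lam w0 t = fst (snd (adam_state alpha beta1 beta2 eps lam w0 t))"
definition adam_w :: "real \<Rightarrow> real \<Rightarrow> real \<Rightarrow> real \<Rightarrow> real \<Rightarrow> real \<Rightarrow> nat \<Rightarrow> real" where
  "adam_w alpha beta1 beta2 eps lam w0 t = snd (snd (adam_state alpha beta1 beta2 eps lam w0 t))"

end

theory Submission
  imports Defs
begin

lemma adam_rec:
  "adam_m a b1 b2 e l w0 (Suc t) = b1 * adam_m a b1 b2 e l w0 t + (1 - b1) * (l * adam_w a b1 b2 e l w0 t)"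
  "adam_v a b1 b2 e l w0 (Suc t) = b2 * adam_v a b1 b2 e l w0 t + (1 - b2) * (l * adam_w a b1 b2 e l w0 t)\<^sup>2"
  "adam_w a b1 b2 e l w0 (Suc t) = adam_w a b1 b2 e l w0 t - a * (adam_m a b1 b2 e l w0 (Suc t) / (1 - b1 ^ Suc t))
      / sqrt (adam_v a b1 b2 e l w0 (Suc t) / (1 - b2 ^ Suc t) + e)"
  by (simp_all add: adam_m_def adam_v_def adam_w_def split_def Let_def)

lemma Lim_null_comparison:
  fixes f g :: "nat \<Rightarrow> real"
  assumes "eventually (\<lambda>x. norm (f x) \<le> g x) sequentially" "g \<longlonglongrightarrow> 0"
  shows "f \<longlonglongrightarrow> 0"
proof (rule tendsto_0_le[OF assms(2), of _ 1])
  show "\<forall>\<^sub>F x in sequentially. norm (f x) \<le> norm (g x) * 1"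
    using assms(1) by eventually_elim auto
qed

theorem proposition3p3:
  fixes alpha beta1 beta2 eps lam w0 wstar :: real
  assumes "alpha > 0" and "0 < beta1" and "beta1 < 1" and "0 < beta2" and "beta2 < 1"
    and "eps > 0" and "lam > 0"
    and "adam_w alpha beta1 beta2 eps lam w0 \<longlonglongrightarrow> wstar"
  shows "wstar = 0"
proof -
  define m where "m = adam_m alpha beta1 beta2 eps lam w0"
  define v where "v = adam_v alpha beta1 beta2 eps lam w0"
  define w where "w = adam_w alpha beta1 beta2 eps lam w0"
  have rm: "\<And>t. m (Suc t) = beta1 * m t + (1 - beta1) * (lam * w t)"
    unfolding m_def w_def by (rule adam_rec)
  have rv: "\<And>t. v (Suc t) = beta2 * v t + (1 - beta2) * (lam * w t)\<^sup>2"
    unfolding v_def w_def by (rule adam_rec)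
  have rw: "\<And>t. w (Suc t) = w t - alpha * (m (Suc t) / (1 - beta1 ^ Suc t))
      / sqrt (v (Suc t) / (1 - beta2 ^ Suc t) + eps)"
    unfolding v_def w_def m_def by (rule adam_rec)
  have wl: "w \<longlonglongrightarrow> wstar" using assms(8) w_def by simp
  then have "Bseq w" using convergent_imp_Bseq convergentI by blast
  then obtain K where K: "K > 0" "\<And>t. norm (w t) \<le> K" using BseqE by metis
  define B where "B = (lam * K)\<^sup>2"
  have gB: "(lam * w t)\<^sup>2 \<le> B" for t
  proof -
    have "\<bar>lam * w t\<bar> \<le> lam * K" using K(2)[of t] assms(7)
      by (simp add: abs_mult mult_left_mono)
    then show ?thesis unfolding B_def
      using power_mono[OF _ abs_ge_zero, of "lam * w t" "lam * K" 2] by simp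
  qed
  have vB: "0 \<le> v t \<and> v t \<le> B" for t
  proof (induction t)
    case 0
    have "v 0 = 0" unfolding v_def adam_v_def by simp
    then show ?case unfolding B_def by simp
  next
    case (Suc t)
    have "beta2 * v t \<le> beta2 * B" using Suc assms(4) by (simp add: mult_left_mono)
    moreover have "(1 - beta2) * (lam * w t)\<^sup>2 \<le> (1 - beta2) * B"
      using gB[of t] assms(5) by (simp add: mult_left_mono)
    moreover have "0 \<le> beta2 * v t" using Suc assms(4) by simp
    moreover have "0 \<le> (1 - beta2) * (lam * w t)\<^sup>2" using assms(5) by simp
    ultimately show ?case unfolding rv by (simp add: algebra_simps)
  qed
  define C where "C = sqrt (B / (1 - beta2) + eps)"
  have Sb: "sqrt (v (Suc t) / (1 - beta2 ^ Suc t) + eps) \<le> C"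
    and Sp: "sqrt (v (Suc t) / (1 - beta2 ^ Suc t) + eps) > 0" for t
  proof -
    have p: "beta2 ^ Suc t \<le> beta2"
      using assms(4,5) power_le_one[of beta2 t] mult_left_le[of "beta2 ^ t" beta2] by simp
    have q: "1 - beta2 ^ Suc t > 0" using p assms(5) by linarith
    have "v (Suc t) / (1 - beta2 ^ Suc t) \<le> v (Suc t) / (1 - beta2)"
      using vB[of "Suc t"] p assms(5) by (intro divide_left_mono) auto
    also have "\<dots> \<le> B / (1 - beta2)"
      using vB[of "Suc t"] assms(5) by (intro divide_right_mono) auto
    finally have "v (Suc t) / (1 - beta2 ^ Suc t) \<le> B / (1 - beta2)" .
    then show "sqrt (v (Suc t) / (1 - beta2 ^ Suc t) + eps) \<le> C" unfolding C_def by simp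
    show "sqrt (v (Suc t) / (1 - beta2 ^ Suc t) + eps) > 0"
    proof -
      have "0 \<le> v (Suc t) / (1 - beta2 ^ Suc t)" using vB[of "Suc t"] q by simp
      then show ?thesis using assms(6) by simp
    qed
  qed
  define mh where "mh t = m (Suc t) / (1 - beta1 ^ Suc t)" for t
  have mh_eq: "mh t = (w t - w (Suc t)) * sqrt (v (Suc t) / (1 - beta2 ^ Suc t) + eps) / alpha" for t
  proof -
    define S where "S = sqrt (v (Suc t) / (1 - beta2 ^ Suc t) + eps)"
    have "w (Suc t) = w t - alpha * mh t / S" using rw[of t] unfolding S_def mh_def by simp
    moreover have "S > 0" unfolding S_def by (rule Sp)
    ultimately have "mh t = (w t - w (Suc t)) * S / alpha" using assms(1) by (simp add: field_simps)
    then show ?thesis unfolding S_def .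
  qed
  have dw: "(\<lambda>t. w t - w (Suc t)) \<longlonglongrightarrow> 0"
  proof -
    have "(\<lambda>t. w t - w (Suc t)) \<longlonglongrightarrow> wstar - wstar"
      using wl LIMSEQ_Suc[OF wl] by (intro tendsto_diff)
    then show ?thesis by simp
  qed
  have mh0: "mh \<longlonglongrightarrow> 0"
  proof (rule Lim_null_comparison)
    show "\<forall>\<^sub>F t in sequentially. norm (mh t) \<le> \<bar>w t - w (Suc t)\<bar> * C / alpha"
    proof (intro always_eventually allI)
      fix t
      have "norm (mh t) = \<bar>w t - w (Suc t)\<bar> * sqrt (v (Suc t) / (1 - beta2 ^ Suc t) + eps) / alpha"
        using mh_eq[of t] Sp[of t] assms(1) by (simp add: abs_mult)
      also have "\<dots> \<le> \<bar>w t - w (Suc t)\<bar> * C / alpha"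
        using Sb[of t] assms(1) by (simp add: divide_right_mono mult_left_mono)
      finally show "norm (mh t) \<le> \<bar>w t - w (Suc t)\<bar> * C / alpha" .
    qed
    show "(\<lambda>t. \<bar>w t - w (Suc t)\<bar> * C / alpha) \<longlonglongrightarrow> 0"
      using tendsto_divide[OF tendsto_mult[OF tendsto_rabs[OF dw] tendsto_const[of C]] tendsto_const[of alpha]] assms(1)
      by simp
  qed
  have mS: "(\<lambda>t. m (Suc t)) \<longlonglongrightarrow> 0"
  proof (rule Lim_null_comparison)
    show "\<forall>\<^sub>F t in sequentially. norm (m (Suc t)) \<le> norm (mh t)"
    proof (intro always_eventually allI)
      fix t
      have q: "0 < 1 - beta1 ^ Suc t" "1 - beta1 ^ Suc t \<le> 1"
      proof -
        have "beta1 ^ Suc t \<le> beta1"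
          using assms(2,3) power_le_one[of beta1 t] mult_left_le[of "beta1 ^ t" beta1] by simp
        moreover have "0 \<le> beta1 ^ Suc t" using assms(2) by simp
        ultimately show "0 < 1 - beta1 ^ Suc t" "1 - beta1 ^ Suc t \<le> 1" using assms(3) by linarith+
      qed
      have "m (Suc t) = mh t * (1 - beta1 ^ Suc t)" unfolding mh_def using q by simp
      then have "norm (m (Suc t)) = norm (mh t) * (1 - beta1 ^ Suc t)" using q by (simp add: abs_mult)
      also have "\<dots> \<le> norm (mh t)" using q by (simp add: mult_left_le)
      finally show "norm (m (Suc t)) \<le> norm (mh t)" .
    qed
    show "(\<lambda>t. norm (mh t)) \<longlonglongrightarrow> 0" using tendsto_norm_zero[OF mh0] .
  qed
  then have m0: "m \<longlonglongrightarrow> 0" by (rule LIMSEQ_imp_Suc)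
  have "(\<lambda>t. (m (Suc t) - beta1 * m t) / ((1 - beta1) * lam)) \<longlonglongrightarrow> (0 - beta1 * 0) / ((1 - beta1) * lam)"
    using assms(3,7) by (intro tendsto_intros mS m0) auto
  moreover have "(\<lambda>t. (m (Suc t) - beta1 * m t) / ((1 - beta1) * lam)) = w"
    using rm assms(3,7) by (auto simp: field_simps)
  ultimately have "w \<longlonglongrightarrow> 0" by simp
  then show ?thesis using wl LIMSEQ_unique by blast
qed

end
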